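(* Fix $V>0$. For $x\in\mathbb N$ let $\delta=V/x$ and consider the discrete first-price auction with $n=2$ bidders, in the model without ties, with values drawn independently and uniformly from $X_\delta=\{0,\delta,2\delta,\dots,x\delta=V\}$ and bids in $X_\delta$. Let $\beta_\delta$ be any symmetric equilibrium of this game. Then $\max_{v\in X_\delta}|\beta_\delta(v)-v/2|\le\delta/2$, so $\beta_\delta$ converges uniformly to the continuous equilibrium bidding function $v\mapsto v/2$ as $\delta\to0$; and the expected highest bid $\mathbb E[\max\{\beta_\delta(v_1),\beta_\delta(v_2)\}]$ converges, as $\delta\to0$, to $V/3$, the expected highest bid in the continuous first-price auction with two bidders whose values are i.i.d. uniform on $[0,V]$ and who bid $v/2$.
   Context: Model. Two risk-neutral bidders compete for one indivisible object. Values and bids lie in $X_\delta$; values are i.i.d. uniform on $X_\delta$. A strategy is a bidding function $\beta:X_\delta\to X_\delta$. In the model without ties, a bidder wins iff their bid is strictly higher than the opponent's (if tied, nobody wins). In the first-price auction, a bidder with value $v_i$ bidding $b_i$ gets expected payoff $(v_i-b_i)\Pr(i\text{ wins})$. An equilibrium is a profile of bidding functions such that each bidder's bidding function maximises their expected payoff given the other's (a pure-strategy Bayes–Nash equilibrium) and such that no bidder uses a weakly dominated bidding function (a bidding function is weakly dominated if some other bidding function yields at least as high expected payoff against every opponent bidding function, and strictly higher against some). A symmetric equilibrium is an equilibrium in which both bidders use the same bidding function. *)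

theory Defs
  imports "HOL-Analysis.Analysis"
begin

text \<open>Bidding functions are real functions; only their values on the grid matter,
  and a (feasible) bidding function maps the grid into the grid.\<close>

definition grid :: "real \<Rightarrow> nat \<Rightarrow> real set" where
  "grid V x = (\<lambda>k. real k * (V / real x)) ` {0..x}"

definition is_strategy :: "real \<Rightarrow> nat \<Rightarrow> (real \<Rightarrow> real) \<Rightarrow> bool" where
  "is_strategy V x \<beta> \<longleftrightarrow> (\<forall>v\<in>grid V x. \<beta> v \<in> grid V x)"

text \<open>Probability that bid b strictly beats the opponent using \<gamma>
  (opponent's value uniform on the grid; ties: nobody wins).\<close>
definition win_prob :: "real \<Rightarrow> nat \<Rightarrow> real \<Rightarrow> (real \<Rightarrow> real) \<Rightarrow> real" where
  "win_prob V x b \<gamma> = real (card {w \<in> grid V x. \<gamma> w < b}) / real (card (grid V x))"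

definition payoff :: "real \<Rightarrow> nat \<Rightarrow> (real \<Rightarrow> real) \<Rightarrow> (real \<Rightarrow> real) \<Rightarrow> real" where
  "payoff V x \<beta> \<gamma> =
     (\<Sum>v\<in>grid V x. (v - \<beta> v) * win_prob V x (\<beta> v) \<gamma>) / real (card (grid V x))"

definition best_response :: "real \<Rightarrow> nat \<Rightarrow> (real \<Rightarrow> real) \<Rightarrow> (real \<Rightarrow> real) \<Rightarrow> bool" where
  "best_response V x \<beta> \<gamma> \<longleftrightarrow> is_strategy V x \<beta> \<and>
     (\<forall>\<beta>'. is_strategy V x \<beta>' \<longrightarrow> payoff V x \<beta>' \<gamma> \<le> payoff V x \<beta> \<gamma>)"

definition weakly_dominated :: "real \<Rightarrow> nat \<Rightarrow> (real \<Rightarrow> real) \<Rightarrow> bool" where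
  "weakly_dominated V x \<beta> \<longleftrightarrow> (\<exists>\<beta>'. is_strategy V x \<beta>' \<and>
     (\<forall>\<gamma>. is_strategy V x \<gamma> \<longrightarrow> payoff V x \<beta> \<gamma> \<le> payoff V x \<beta>' \<gamma>) \<and>
     (\<exists>\<gamma>. is_strategy V x \<gamma> \<and> payoff V x \<beta> \<gamma> < payoff V x \<beta>' \<gamma>))"

definition equilibrium :: "real \<Rightarrow> nat \<Rightarrow> (real \<Rightarrow> real) \<Rightarrow> (real \<Rightarrow> real) \<Rightarrow> bool" where
  "equilibrium V x \<beta>1 \<beta>2 \<longleftrightarrow>
     best_response V x \<beta>1 \<beta>2 \<and> best_response V x \<beta>2 \<beta>1 \<and>
     \<not> weakly_dominated V x \<beta>1 \<and> \<not> weakly_dominated V x \<beta>2"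

definition symmetric_equilibrium :: "real \<Rightarrow> nat \<Rightarrow> (real \<Rightarrow> real) \<Rightarrow> bool" where
  "symmetric_equilibrium V x \<beta> \<longleftrightarrow> equilibrium V x \<beta> \<beta>"

definition expected_highest_bid :: "real \<Rightarrow> nat \<Rightarrow> (real \<Rightarrow> real) \<Rightarrow> real" where
  "expected_highest_bid V x \<beta> =
     (\<Sum>v1\<in>grid V x. \<Sum>v2\<in>grid V x. max (\<beta> v1) (\<beta> v2)) / (real (card (grid V x)))^2"

end

theory Submission
  imports Defs "HOL-Real_Asymp.Real_Asymp"
begin


lemma core_mono:
  fixes b :: "nat \<Rightarrow> nat" and x :: nat
  assumes br: "\<And>k c. k \<le> x \<Longrightarrow> c \<le> x \<Longrightarrow>
     (int k - int c) * int (card {w\<in>{0..x}. b w < c}) \<le> (int k - int (b k)) * int (card {w\<in>{0..x}. b w < b k})"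
    and bx: "\<And>k. k \<le> x \<Longrightarrow> b k \<le> x"
    and kk: "k < k'" "k' \<le> x"
  shows "b k \<le> b k'"
proof (rule ccontr)
  assume "\<not> b k \<le> b k'"
  hence lt: "b k' < b k" by simp
  define A where "A = int (card {w\<in>{0..x}. b w < b k})"
  define B where "B = int (card {w\<in>{0..x}. b w < b k'})"
  have "{w\<in>{0..x}. b w < b k'} \<subset> {w\<in>{0..x}. b w < b k}"
    using lt kk by auto
  hence "card {w\<in>{0..x}. b w < b k'} < card {w\<in>{0..x}. b w < b k}"
    by (intro psubset_card_mono) auto
  hence AB: "B < A" unfolding A_def B_def by simp
  have H1: "(int k - int (b k')) * B \<le> (int k - int (b k)) * A"
    using br[of k "b k'"] bx kk unfolding A_def B_def by simp
  have H2: "(int k' - int (b k)) * A \<le> (int k' - int (b k')) * B"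
    using br[of k' "b k"] bx kk unfolding A_def B_def by simp
  have "(int k' - int k) * A \<le> (int k' - int k) * B"
    using H1 H2 by (simp add: algebra_simps)
  moreover have "(int k' - int k) * B < (int k' - int k) * A"
    using AB kk by (intro mult_strict_left_mono) auto
  ultimately show False by simp
qed

lemma core:
  fixes b :: "nat \<Rightarrow> nat" and x :: nat
  assumes br: "\<And>k c. k \<le> x \<Longrightarrow> c \<le> x \<Longrightarrow>
     (int k - int c) * int (card {w\<in>{0..x}. b w < c}) \<le> (int k - int (b k)) * int (card {w\<in>{0..x}. b w < b k})"
    and bx: "\<And>k. k \<le> x \<Longrightarrow> b k \<le> x"
    and u0: "b 0 = 0"
    and u1: "1 \<le> x \<Longrightarrow> b 1 \<le> 1"
    and u2: "\<And>k. 2 \<le> k \<Longrightarrow> k \<le> x \<Longrightarrow> 1 \<le> b k \<and> b k < k"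
  shows "k \<le> x \<Longrightarrow> \<bar>2 * int (b k) - int k\<bar> \<le> 1"
proof (induction k rule: less_induct)
  case (less k)
  have mono: "\<And>i j. i < j \<Longrightarrow> j \<le> x \<Longrightarrow> b i \<le> b j"
    using core_mono[OF br bx] by blast
  define N where "N = (\<lambda>c. card {w\<in>{0..x}. b w < c})"
  show ?case
  proof (cases "k < 2")
    case True
    then show ?thesis using u0 u1 less.prems by (cases k) auto
  next
    case False
    hence k2: "2 \<le> k" by simp
    define c where "c = b k"
    have ck: "1 \<le> c" "c < k" using u2[OF k2 less.prems] c_def by auto
    have IH: "\<And>w. w < k \<Longrightarrow> \<bar>2 * int (b w) - int w\<bar> \<le> 1"
      using less.IH less.prems by simp
    show ?thesis
    proof (rule ccontr)
      assume "\<not> ?thesis"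
      hence "k + 2 \<le> 2 * c \<or> 2 * c + 2 \<le> k" unfolding c_def by linarith
      thus False
      proof
        assume hi: "k + 2 \<le> 2 * c"
        define d where "d = c - 1"
        have cd: "c = d + 1" using ck d_def by simp
        have "{w\<in>{0..x}. b w < c} \<subseteq> {0..<k}"
        proof
          fix w assume w: "w \<in> {w\<in>{0..x}. b w < c}"
          show "w \<in> {0..<k}"
          proof (rule ccontr)
            assume "w \<notin> {0..<k}"
            hence "k \<le> w" by simp
            hence "b k \<le> b w" using mono[of k w] w by (cases "k = w") auto
            thus False using w c_def by simp
          qed
        qed
        hence "card {w\<in>{0..x}. b w < c} \<le> card {0..<k}" by (intro card_mono) auto
        hence NA: "N c \<le> k" unfolding N_def by simp
        have "{0..<min k (2*c-3)} \<subseteq> {w\<in>{0..x}. b w < d}"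
        proof
          fix w assume w: "w \<in> {0..<min k (2*c-3)}"
          hence "w < k" "w + 4 \<le> 2 * c" by auto
          with IH[of w] have "2 * b w \<le> 2 * c - 3" by linarith
          thus "w \<in> {w\<in>{0..x}. b w < d}" using w less.prems cd by auto
        qed
        hence "card {0..<min k (2*c-3)} \<le> card {w\<in>{0..x}. b w < d}" by (intro card_mono) auto
        hence NB: "min k (2*c-3) \<le> N d" unfolding N_def by simp
        have H: "(int k - int d) * int (N d) \<le> (int k - int c) * int (N c)"
          using br[of k d] less.prems ck cd unfolding N_def c_def by simp
        have "(int k - int c) * int (N c) \<le> (int k - int c) * int k"
          using NA ck by (intro mult_left_mono) auto
        show False
        proof (cases "k \<le> 2 * c - 3")
          case True
          hence "k \<le> N d" using NB by simp
          hence "(int k - int d) * int k \<le> (int k - int d) * int (N d)"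
            using ck cd by (intro mult_left_mono) auto
          then show False using H \<open>(int k - int c) * int (N c) \<le> (int k - int c) * int k\<close> cd k2
            by (simp add: algebra_simps)
        next
          case False
          hence kk: "int k = 2 * int c - 2" using hi by linarith
          hence "int k - 1 \<le> int (N d)" using NB False by simp
          hence "(int k - int d) * (int k - 1) \<le> (int k - int d) * int (N d)"
            using ck cd by (intro mult_left_mono) auto
          hence "(int k - int c + 1) * (int k - 1) \<le> (int k - int c) * int k"
            using H \<open>(int k - int c) * int (N c) \<le> (int k - int c) * int k\<close> cd by simp
          moreover have "(int k - int c + 1) * (int k - 1) - (int k - int c) * int k = int c - 1"
            by (simp add: algebra_simps)
          ultimately show False using hi k2 by linarith
        qed
      next
        assume lo: "2 * c + 2 \<le> k"
        have "{0..k} \<subseteq> {w\<in>{0..x}. b w < c + 1}"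
        proof
          fix w assume w: "w \<in> {0..k}"
          hence "b w \<le> c" using mono[of w k] less.prems c_def by (cases "w = k") auto
          thus "w \<in> {w\<in>{0..x}. b w < c + 1}" using w less.prems by auto
        qed
        hence "card {0..k} \<le> card {w\<in>{0..x}. b w < c + 1}" by (intro card_mono) auto
        hence NA: "k + 1 \<le> N (c + 1)" unfolding N_def by simp
        have "{w\<in>{0..x}. b w < c} \<subseteq> {0..<2*c}"
        proof
          fix w assume w: "w \<in> {w\<in>{0..x}. b w < c}"
          have "w < k"
          proof (rule ccontr)
            assume "\<not> w < k"
            hence "b k \<le> b w" using mono[of k w] w by (cases "k = w") auto
            thus False using w c_def by simp
          qed
          with IH[of w] w show "w \<in> {0..<2*c}" by auto
        qed
        hence "card {w\<in>{0..x}. b w < c} \<le> card {0..<2*c}" by (intro card_mono) auto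
        hence NB: "N c \<le> 2 * c" unfolding N_def by simp
        have H: "(int k - int (c+1)) * int (N (c+1)) \<le> (int k - int c) * int (N c)"
          using br[of k "c+1"] less.prems lo unfolding N_def c_def by simp
        have "(int k - int (c+1)) * (int k + 1) \<le> (int k - int (c+1)) * int (N (c+1))"
          using NA lo by (intro mult_left_mono) auto
        moreover have "(int k - int c) * int (N c) \<le> (int k - int c) * (2 * int c)"
          using NB ck by (intro mult_left_mono) auto
        ultimately have "(int k - int (c+1)) * (int k + 1) \<le> (int k - int c) * (2 * int c)"
          using H by linarith
        moreover obtain j where j: "k = 2 * c + 2 + j" using lo le_Suc_ex by (metis add.commute)
        moreover have "0 \<le> int c * int j" "0 \<le> int j * int j" by auto
        ultimately show False by (simp add: algebra_simps)
      qed
    qed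
  qed
qed



lemma grid_inj: "V > 0 \<Longrightarrow> 1 \<le> x \<Longrightarrow> inj_on (\<lambda>k. real k * (V / real x)) A"
  by (auto simp: inj_on_def)

lemma finite_grid: "finite (grid V x)"
  unfolding grid_def by simp

lemma card_grid: "V > 0 \<Longrightarrow> 1 \<le> x \<Longrightarrow> card (grid V x) = x + 1"
  unfolding grid_def by (subst card_image[OF grid_inj]) auto

lemma grid_nonneg: "V > 0 \<Longrightarrow> v \<in> grid V x \<Longrightarrow> 0 \<le> v"
  unfolding grid_def by auto

lemma zero_grid: "0 \<in> grid V x"
  unfolding grid_def by force

lemma grid_pt: "k \<le> x \<Longrightarrow> real k * (V / real x) \<in> grid V x"
  unfolding grid_def by auto

lemma payoff_upd:
  assumes "v \<in> grid V x"
  shows "payoff V x (\<beta>(v:=c)) \<gamma> = payoff V x \<beta> \<gamma> +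
     ((v - c) * win_prob V x c \<gamma> - (v - \<beta> v) * win_prob V x (\<beta> v) \<gamma>) / real (card (grid V x))"
proof -
  let ?T = "\<lambda>\<beta> w. (w - \<beta> w) * win_prob V x (\<beta> w) \<gamma>"
  have f: "finite (grid V x)" by (rule finite_grid)
  have "(\<Sum>w\<in>grid V x. ?T (\<beta>(v:=c)) w) = ?T (\<beta>(v:=c)) v + (\<Sum>w\<in>grid V x - {v}. ?T (\<beta>(v:=c)) w)"
    using f assms by (rule sum.remove)
  also have "(\<Sum>w\<in>grid V x - {v}. ?T (\<beta>(v:=c)) w) = (\<Sum>w\<in>grid V x - {v}. ?T \<beta> w)"
    by (rule sum.cong) auto
  also have "(\<Sum>w\<in>grid V x - {v}. ?T \<beta> w) = (\<Sum>w\<in>grid V x. ?T \<beta> w) - ?T \<beta> v"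
    using sum.remove[OF f assms, of "?T \<beta>"] by simp
  finally show ?thesis unfolding payoff_def by (simp add: diff_divide_distrib add_divide_distrib)
qed

lemma wp_nonneg: "0 \<le> win_prob V x b \<gamma>"
  unfolding win_prob_def by simp

lemma wp_le1: "win_prob V x b \<gamma> \<le> 1"
proof -
  have "card {w \<in> grid V x. \<gamma> w < b} \<le> card (grid V x)"
    by (rule card_mono[OF finite_grid]) auto
  thus ?thesis unfolding win_prob_def by (auto simp add: divide_le_eq_1)
qed

lemma wp_zero: "V > 0 \<Longrightarrow> is_strategy V x \<gamma> \<Longrightarrow> win_prob V x 0 \<gamma> = 0"
  unfolding win_prob_def is_strategy_def using grid_nonneg
  by (metis (no_types, lifting) Collect_empty_eq card.empty divide_eq_0_iff not_less of_nat_0)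

lemma wp_const0: "V > 0 \<Longrightarrow> 1 \<le> x \<Longrightarrow> 0 < b \<Longrightarrow> win_prob V x b (\<lambda>_. 0) = 1"
  unfolding win_prob_def using card_grid[of V x] by simp

lemma strat0: "is_strategy V x (\<lambda>_. 0)"
  unfolding is_strategy_def using zero_grid by auto

lemma dominated:
  assumes V: "V > 0" and x: "1 \<le> x" and s: "is_strategy V x \<beta>"
    and v: "v \<in> grid V x" and c: "c \<in> grid V x"
    and le: "\<And>\<gamma>. is_strategy V x \<gamma> \<Longrightarrow> (v - \<beta> v) * win_prob V x (\<beta> v) \<gamma> \<le> (v - c) * win_prob V x c \<gamma>"
    and lt: "(v - \<beta> v) * win_prob V x (\<beta> v) (\<lambda>_. 0) < (v - c) * win_prob V x c (\<lambda>_. 0)"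
  shows "weakly_dominated V x \<beta>"
proof -
  have cp: "0 < real (card (grid V x))" using card_grid[OF V x] by simp
  have s': "is_strategy V x (\<beta>(v:=c))" using s c unfolding is_strategy_def by auto
  have A: "\<forall>\<gamma>. is_strategy V x \<gamma> \<longrightarrow> payoff V x \<beta> \<gamma> \<le> payoff V x (\<beta>(v:=c)) \<gamma>"
    using le cp unfolding payoff_upd[OF v] by simp
  have B: "is_strategy V x (\<lambda>_. 0) \<and> payoff V x \<beta> (\<lambda>_. 0) < payoff V x (\<beta>(v:=c)) (\<lambda>_. 0)"
    using strat0 lt cp unfolding payoff_upd[OF v] by simp
  show ?thesis unfolding weakly_dominated_def using s' A B by blast
qed

lemma br_ineq:
  assumes V: "V > 0" and x: "1 \<le> x" and br: "best_response V x \<beta> \<gamma>"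
    and v: "v \<in> grid V x" and c: "c \<in> grid V x"
  shows "(v - c) * win_prob V x c \<gamma> \<le> (v - \<beta> v) * win_prob V x (\<beta> v) \<gamma>"
proof -
  have cp: "0 < real (card (grid V x))" using card_grid[OF V x] by simp
  have "is_strategy V x (\<beta>(v:=c))" using br c unfolding is_strategy_def best_response_def by auto
  hence "payoff V x (\<beta>(v:=c)) \<gamma> \<le> payoff V x \<beta> \<gamma>" using br unfolding best_response_def by blast
  thus ?thesis unfolding payoff_upd[OF v] using cp by (simp add: divide_le_0_iff)
qed



lemma part1:
  assumes V: "V > 0" and x: "1 \<le> x" and eq: "symmetric_equilibrium V x \<beta>"
  shows "\<forall>v\<in>grid V x. \<bar>\<beta> v - v / 2\<bar> \<le> (V / real x) / 2"
proof -
  define d where "d = V / real x"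
  have d0: "0 < d" using V x d_def by simp
  have br: "best_response V x \<beta> \<beta>" and nd: "\<not> weakly_dominated V x \<beta>"
    using eq unfolding symmetric_equilibrium_def equilibrium_def by auto
  have s: "is_strategy V x \<beta>" using br unfolding best_response_def by simp
  have gp: "\<And>k. k \<le> x \<Longrightarrow> real k * d \<in> grid V x" using grid_pt d_def by metis
  define b where "b = (\<lambda>k. SOME j. j \<le> x \<and> \<beta> (real k * d) = real j * d)"
  have bspec: "b k \<le> x \<and> \<beta> (real k * d) = real (b k) * d" if "k \<le> x" for k
  proof -
    have "\<beta> (real k * d) \<in> grid V x" using s gp[OF that] unfolding is_strategy_def by blast
    hence "\<exists>j. j \<le> x \<and> \<beta> (real k * d) = real j * d" unfolding grid_def d_def by auto
    thus ?thesis unfolding b_def by (rule someI_ex)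
  qed
  define N where "N = (\<lambda>c. card {w\<in>{0..x}. b w < c})"
  have wp: "win_prob V x (real j * d) \<beta> = real (N j) / real (x + 1)" for j
  proof -
    have "{w\<in>grid V x. \<beta> w < real j * d} = (\<lambda>k. real k * d) ` {i\<in>{0..x}. b i < j}"
    proof
      show "{w\<in>grid V x. \<beta> w < real j * d} \<subseteq> (\<lambda>k. real k * d) ` {i\<in>{0..x}. b i < j}"
      proof
        fix w assume "w \<in> {w\<in>grid V x. \<beta> w < real j * d}"
        then obtain i where i: "i \<le> x" "w = real i * d" "\<beta> w < real j * d"
          unfolding grid_def d_def by auto
        hence "b i < j" using bspec[OF i(1)] d0 by simp
        thus "w \<in> (\<lambda>k. real k * d) ` {i\<in>{0..x}. b i < j}" using i by auto
      qed
    next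
      show "(\<lambda>k. real k * d) ` {i\<in>{0..x}. b i < j} \<subseteq> {w\<in>grid V x. \<beta> w < real j * d}"
        using bspec gp d0 by auto
    qed
    hence "card {w\<in>grid V x. \<beta> w < real j * d} = N j"
      unfolding N_def using grid_inj[OF V x] d_def by (simp add: card_image)
    thus ?thesis unfolding win_prob_def using card_grid[OF V x] by simp
  qed
  have brI: "(int k - int c) * int (N c) \<le> (int k - int (b k)) * int (N (b k))"
    if k: "k \<le> x" and c: "c \<le> x" for k c
  proof -
    have "(real k * d - real c * d) * win_prob V x (real c * d) \<beta>
        \<le> (real k * d - \<beta> (real k * d)) * win_prob V x (\<beta> (real k * d)) \<beta>"
      by (rule br_ineq[OF V x br gp[OF k] gp[OF c]])
    hence "(real k * d - real c * d) * (real (N c) / real (x + 1))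
        \<le> (real k * d - real (b k) * d) * (real (N (b k)) / real (x + 1))"
      using bspec[OF k] wp by simp
    hence "(d / real (x+1)) * ((real k - real c) * real (N c))
        \<le> (d / real (x+1)) * ((real k - real (b k)) * real (N (b k)))"
      by (simp add: algebra_simps)
    have "(real k - real c) * real (N c) \<le> (real k - real (b k)) * real (N (b k))"
    proof -
      have p: "0 < d / real (x+1)" using d0 by simp
      show ?thesis using mult_le_cancel_left_pos[OF p] \<open>(d / real (x+1)) * ((real k - real c) * real (N c))
        \<le> (d / real (x+1)) * ((real k - real (b k)) * real (N (b k)))\<close> by blast
    qed
    hence "real_of_int ((int k - int c) * int (N c)) \<le> real_of_int ((int k - int (b k)) * int (N (b k)))"
      by simp
    thus ?thesis by linarith
  qed
  have wpz: "\<And>\<gamma>. is_strategy V x \<gamma> \<Longrightarrow> win_prob V x 0 \<gamma> = 0" using wp_zero V by blast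
  have u0: "b 0 = 0"
  proof (rule ccontr)
    assume "b 0 \<noteq> 0"
    hence pos: "0 < real (b 0) * d" using d0 by simp
    have b0: "\<beta> 0 = real (b 0) * d" using bspec[of 0] by simp
    have "weakly_dominated V x \<beta>"
    proof (rule dominated[OF V x s _ zero_grid])
      show "0 \<in> grid V x" by (rule zero_grid)
      show "(0 - \<beta> 0) * win_prob V x (\<beta> 0) \<gamma> \<le> (0 - 0) * win_prob V x 0 \<gamma>" for \<gamma>
        using b0 pos wp_nonneg[of V x "\<beta> 0" \<gamma>] by (simp add: mult_nonneg_nonneg)
      show "(0 - \<beta> 0) * win_prob V x (\<beta> 0) (\<lambda>_. 0) < (0 - 0) * win_prob V x 0 (\<lambda>_. 0)"
        using b0 pos wp_const0[OF V x pos] by simp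
    qed
    thus False using nd by simp
  qed
  have u1: "b 1 \<le> 1"
  proof (rule ccontr)
    assume "\<not> b 1 \<le> 1"
    hence lt: "d < real (b 1) * d" using d0 by simp
    have b1: "\<beta> (real 1 * d) = real (b 1) * d" using bspec[of 1] x by simp
    have pos: "0 < real (b 1) * d" using lt d0 by simp
    have "weakly_dominated V x \<beta>"
    proof (rule dominated[OF V x s gp[OF x] zero_grid])
      show "(real 1 * d - \<beta> (real 1 * d)) * win_prob V x (\<beta> (real 1 * d)) \<gamma> \<le> (real 1 * d - 0) * win_prob V x 0 \<gamma>"
        if "is_strategy V x \<gamma>" for \<gamma>
        using b1 lt wp_nonneg[of V x "\<beta> (real 1 * d)" \<gamma>] wpz[OF that]
        by (simp add: mult_nonpos_nonneg)
      show "(real 1 * d - \<beta> (real 1 * d)) * win_prob V x (\<beta> (real 1 * d)) (\<lambda>_. 0) < (real 1 * d - 0) * win_prob V x 0 (\<lambda>_. 0)"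
        using b1 lt wp_const0[OF V x pos] wpz[OF strat0] by simp
    qed
    thus False using nd by simp
  qed
  have u2: "1 \<le> b k \<and> b k < k" if k2: "2 \<le> k" and kx: "k \<le> x" for k
  proof (rule ccontr)
    assume A: "\<not> (1 \<le> b k \<and> b k < k)"
    have bk: "\<beta> (real k * d) = real (b k) * d" using bspec[OF kx] by simp
    have kd: "real 1 * d < real k * d" using k2 d0 by simp
    have pd: "0 < real 1 * d" using d0 by simp
    have "weakly_dominated V x \<beta>"
    proof (rule dominated[OF V x s gp[OF kx] gp[of 1]])
      show "1 \<le> x" using x .
      show "(real k * d - \<beta> (real k * d)) * win_prob V x (\<beta> (real k * d)) \<gamma> \<le> (real k * d - real 1 * d) * win_prob V x (real 1 * d) \<gamma>"
        if g: "is_strategy V x \<gamma>" for \<gamma>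
      proof -
        have "0 \<le> (real k * d - real 1 * d) * win_prob V x (real 1 * d) \<gamma>"
          using kd wp_nonneg by (simp add: mult_nonneg_nonneg)
        moreover have "(real k * d - \<beta> (real k * d)) * win_prob V x (\<beta> (real k * d)) \<gamma> \<le> 0"
        proof (cases "b k = 0")
          case True then show ?thesis using bk wpz[OF g] by simp
        next
          case False
          hence "k \<le> b k" using A by simp
          hence "real k * d \<le> real (b k) * d" using d0 by simp
          then show ?thesis using bk wp_nonneg by (simp add: mult_nonpos_nonneg)
        qed
        ultimately show ?thesis by linarith
      qed
      show "(real k * d - \<beta> (real k * d)) * win_prob V x (\<beta> (real k * d)) (\<lambda>_. 0) < (real k * d - real 1 * d) * win_prob V x (real 1 * d) (\<lambda>_. 0)"
      proof -
        have r: "(real k * d - real 1 * d) * win_prob V x (real 1 * d) (\<lambda>_. 0) = real k * d - real 1 * d"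
          using wp_const0[OF V x pd] by simp
        have "(real k * d - \<beta> (real k * d)) * win_prob V x (\<beta> (real k * d)) (\<lambda>_. 0) \<le> 0"
        proof (cases "b k = 0")
          case True then show ?thesis using bk wpz[OF strat0] by simp
        next
          case False
          hence "k \<le> b k" using A by simp
          hence "real k * d \<le> real (b k) * d" using d0 by simp
          then show ?thesis using bk wp_nonneg by (simp add: mult_nonpos_nonneg)
        qed
        thus ?thesis using r kd by linarith
      qed
    qed
    thus False using nd by simp
  qed
  have bx: "\<And>k. k \<le> x \<Longrightarrow> b k \<le> x" using bspec by blast
  have main: "\<And>k. k \<le> x \<Longrightarrow> \<bar>2 * int (b k) - int k\<bar> \<le> 1"
    using core[of x b, OF brI[unfolded N_def] bx u0 u1 u2] x by blast
  show ?thesis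
  proof
    fix v assume "v \<in> grid V x"
    then obtain k where k: "k \<le> x" "v = real k * d" unfolding grid_def d_def by auto
    have "\<beta> v - v / 2 = d / 2 * real_of_int (2 * int (b k) - int k)"
      using k bspec[OF k(1)] by (simp add: algebra_simps)
    hence "\<bar>\<beta> v - v / 2\<bar> = \<bar>d / 2\<bar> * \<bar>real_of_int (2 * int (b k) - int k)\<bar>"
      by (simp only: abs_mult)
    hence "\<bar>\<beta> v - v / 2\<bar> = d / 2 * \<bar>real_of_int (2 * int (b k) - int k)\<bar>"
      using d0 by simp
    also have "\<dots> \<le> d / 2 * 1"
    proof -
      have "real_of_int \<bar>2 * int (b k) - int k\<bar> \<le> real_of_int 1"
        using main[OF k(1)] by (simp only: of_int_le_iff)
      hence m: "\<bar>real_of_int (2 * int (b k) - int k)\<bar> \<le> 1" by simp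
      show ?thesis using m d0 by (intro mult_left_mono) auto
    qed
    finally show "\<bar>\<beta> v - v / 2\<bar> \<le> V / real x / 2" using d_def by simp
  qed
qed



lemma summax: "(\<Sum>i\<le>n. \<Sum>j\<le>n. real (max i j)) = real n * (real n + 1) * (4 * real n + 5) / 6"
proof (induction n)
  case 0 then show ?case by simp
next
  case (Suc n)
  have a: "(\<Sum>i\<le>n. real (max i (Suc n))) = (\<Sum>i\<le>n. real (Suc n))"
    by (rule sum.cong) auto
  have b: "(\<Sum>j\<le>n. real (max (Suc n) j)) = (\<Sum>j\<le>n. real (Suc n))"
    by (rule sum.cong) auto
  have "(\<Sum>i\<le>Suc n. \<Sum>j\<le>Suc n. real (max i j)) = (\<Sum>i\<le>n. \<Sum>j\<le>n. real (max i j))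
      + (\<Sum>i\<le>n. real (max i (Suc n))) + (\<Sum>j\<le>n. real (max (Suc n) j)) + real (Suc n)"
    by (simp add: sum.distrib) (simp add: algebra_simps)
  also have "\<dots> = real n * (real n + 1) * (4 * real n + 5) / 6 + 2 * (real n + 1) * (real n + 1) + (real n + 1)"
    using Suc a b by (simp add: algebra_simps)
  finally show ?case by (simp add: field_simps)
qed

lemma S0:
  assumes V: "V > 0" and x: "1 \<le> x"
  shows "(\<Sum>v1\<in>grid V x. \<Sum>v2\<in>grid V x. max (v1/2) (v2/2)) = V * (real x + 1) * (4 * real x + 5) / 12"
proof -
  define d where "d = V / real x"
  have inj: "inj_on (\<lambda>k. real k * d) {0..x}" using grid_inj[OF V x] d_def by simp
  have g: "grid V x = (\<lambda>k. real k * d) ` {0..x}" unfolding grid_def d_def by simp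
  have "(\<Sum>v1\<in>grid V x. \<Sum>v2\<in>grid V x. max (v1/2) (v2/2)) = (\<Sum>i\<in>{0..x}. \<Sum>j\<in>{0..x}. max (real i * d/2) (real j * d/2))"
    unfolding g by (simp add: sum.reindex[OF inj])
  also have "\<dots> = (\<Sum>i\<in>{0..x}. \<Sum>j\<in>{0..x}. d/2 * real (max i j))"
  proof (intro sum.cong refl)
    fix i j
    have "0 < d" using V x d_def by simp
    thus "max (real i * d/2) (real j * d/2) = d/2 * real (max i j)"
      by (cases "i \<le> j") (auto simp: max_def mult_right_mono)
  qed
  also have "\<dots> = d/2 * (\<Sum>i\<le>x. \<Sum>j\<le>x. real (max i j))"
    by (simp add: sum_distrib_left atLeast0AtMost)
  also have "\<dots> = V * (real x + 1) * (4 * real x + 5) / 12"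
    unfolding summax d_def using x by (simp add: field_simps)
  finally show ?thesis .
qed

lemma lim1: "(\<lambda>x::nat. V / real x / 2) \<longlonglongrightarrow> 0"
  by real_asymp

lemma lim2: "(\<lambda>x::nat. V / 3 + V / (12 * (real x + 1))) \<longlonglongrightarrow> V / 3"
  by real_asymp



lemma ehb_bound:
  assumes V: "V > 0" and x: "1 \<le> x" and b: "\<forall>v\<in>grid V x. \<bar>\<beta> v - v / 2\<bar> \<le> e"
  shows "\<bar>expected_highest_bid V x \<beta> - (V / 3 + V / (12 * (real x + 1)))\<bar> \<le> e"
proof -
  let ?G = "grid V x"
  let ?S = "\<Sum>v1\<in>?G. \<Sum>v2\<in>?G. max (\<beta> v1) (\<beta> v2)"
  let ?Z = "\<Sum>v1\<in>?G. \<Sum>v2\<in>?G. max (v1/2) (v2/2)"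
  have C: "real (card ?G) = real x + 1" using card_grid[OF V x] by simp
  have pw: "max (\<beta> v1) (\<beta> v2) \<le> max (v1/2) (v2/2) + e \<and> max (v1/2) (v2/2) - e \<le> max (\<beta> v1) (\<beta> v2)"
    if "v1 \<in> ?G" "v2 \<in> ?G" for v1 v2
  proof -
    have "\<bar>\<beta> v1 - v1 / 2\<bar> \<le> e" "\<bar>\<beta> v2 - v2 / 2\<bar> \<le> e" using b that by auto
    thus ?thesis by (auto simp: max_def abs_le_iff)
  qed
  have up: "?S \<le> (\<Sum>v1\<in>?G. \<Sum>v2\<in>?G. max (v1/2) (v2/2) + e)"
    by (rule sum_mono, rule sum_mono, meson pw)
  have lo: "(\<Sum>v1\<in>?G. \<Sum>v2\<in>?G. max (v1/2) (v2/2) - e) \<le> ?S"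
    by (rule sum_mono, rule sum_mono, meson pw)
  have e1: "(\<Sum>v1\<in>?G. \<Sum>v2\<in>?G. max (v1/2) (v2/2) + e) = ?Z + (real x + 1)^2 * e"
    using C by (simp add: sum.distrib power2_eq_square algebra_simps)
  have e2: "(\<Sum>v1\<in>?G. \<Sum>v2\<in>?G. max (v1/2) (v2/2) - e) = ?Z - (real x + 1)^2 * e"
    using C by (simp add: sum_subtractf power2_eq_square algebra_simps)
  have s0: "?Z / (real x + 1)^2 = V / 3 + V / (12 * (real x + 1))"
  proof -
    define y where "y = real x + 1"
    have y: "0 < y" unfolding y_def by simp
    have "V * y * (4 * y + 1) / 12 / y^2 = V / 3 + V / (12 * y)"
      using y by (simp add: field_simps power2_eq_square)
    moreover have "4 * real x + 5 = 4 * y + 1" unfolding y_def by simp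
    ultimately show ?thesis unfolding S0[OF V x] y_def by (simp add: add.commute)
  qed
  have pos: "0 < (real x + 1)^2" by simp
  have E: "expected_highest_bid V x \<beta> = ?S / (real x + 1)^2"
    unfolding expected_highest_bid_def C by simp
  have "?S / (real x + 1)^2 \<le> (?Z + (real x + 1)^2 * e) / (real x + 1)^2"
    using up e1 pos by (intro divide_right_mono) auto
  also have "\<dots> = ?Z / (real x + 1)^2 + e" using pos by (simp add: add_divide_distrib)
  finally have A: "?S / (real x + 1)^2 \<le> ?Z / (real x + 1)^2 + e" .
  have "(?Z - (real x + 1)^2 * e) / (real x + 1)^2 \<le> ?S / (real x + 1)^2"
    using lo e2 pos by (intro divide_right_mono) auto
  moreover have "(?Z - (real x + 1)^2 * e) / (real x + 1)^2 = ?Z / (real x + 1)^2 - e"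
    using pos by (simp add: diff_divide_distrib)
  ultimately have B: "?Z / (real x + 1)^2 - e \<le> ?S / (real x + 1)^2" by simp
  show ?thesis using A B unfolding E s0 by linarith
qed

theorem corollary6:
  fixes V :: real
  assumes "V > 0"
  shows "(\<forall>x::nat. \<forall>\<beta>. x \<ge> 1 \<longrightarrow> symmetric_equilibrium V x \<beta> \<longrightarrow>
            (\<forall>v\<in>grid V x. \<bar>\<beta> v - v / 2\<bar> \<le> (V / real x) / 2))
       \<and> (\<forall>\<beta> :: nat \<Rightarrow> real \<Rightarrow> real. (\<forall>x\<ge>1. symmetric_equilibrium V x (\<beta> x)) \<longrightarrow>
            ((\<lambda>x. Max ((\<lambda>v. \<bar>\<beta> x v - v / 2\<bar>) ` grid V x)) \<longlonglongrightarrow> 0)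
          \<and> ((\<lambda>x. expected_highest_bid V x (\<beta> x)) \<longlonglongrightarrow> V / 3))"
proof (intro conjI allI impI)
  fix x :: nat and \<beta> assume "1 \<le> x" "symmetric_equilibrium V x \<beta>"
  thus "\<forall>v\<in>grid V x. \<bar>\<beta> v - v / 2\<bar> \<le> (V / real x) / 2" using part1 assms by blast
next
  fix \<beta> :: "nat \<Rightarrow> real \<Rightarrow> real"
  assume eq: "\<forall>x\<ge>1. symmetric_equilibrium V x (\<beta> x)"
  have bnd: "\<forall>v\<in>grid V x. \<bar>\<beta> x v - v / 2\<bar> \<le> V / real x / 2" if "1 \<le> x" for x
    using part1[OF assms that] eq that by blast
  have ev: "eventually (\<lambda>x. 1 \<le> x) sequentially" by (rule eventually_ge_at_top)
  show "(\<lambda>x. Max ((\<lambda>v. \<bar>\<beta> x v - v / 2\<bar>) ` grid V x)) \<longlonglongrightarrow> 0"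
  proof (rule tendsto_sandwich[OF _ _ tendsto_const lim1])
    show "eventually (\<lambda>x. 0 \<le> Max ((\<lambda>v. \<bar>\<beta> x v - v / 2\<bar>) ` grid V x)) sequentially"
    proof (rule eventually_mono[OF ev])
      fix x :: nat
      have "\<bar>\<beta> x 0 - 0 / 2\<bar> \<le> Max ((\<lambda>v. \<bar>\<beta> x v - v / 2\<bar>) ` grid V x)"
      proof (rule Max_ge)
        show "finite ((\<lambda>v. \<bar>\<beta> x v - v / 2\<bar>) ` grid V x)" by (simp add: finite_grid)
        show "\<bar>\<beta> x 0 - 0 / 2\<bar> \<in> (\<lambda>v. \<bar>\<beta> x v - v / 2\<bar>) ` grid V x"
          by (rule imageI[OF zero_grid])
      qed
      thus "0 \<le> Max ((\<lambda>v. \<bar>\<beta> x v - v / 2\<bar>) ` grid V x)" by linarith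
    qed
    show "eventually (\<lambda>x. Max ((\<lambda>v. \<bar>\<beta> x v - v / 2\<bar>) ` grid V x) \<le> V / real x / 2) sequentially"
    proof (rule eventually_mono[OF ev])
      fix x :: nat assume "1 \<le> x"
      thus "Max ((\<lambda>v. \<bar>\<beta> x v - v / 2\<bar>) ` grid V x) \<le> V / real x / 2"
        using bnd[of x] zero_grid[of V x] by (subst Max_le_iff) (auto simp: finite_grid)
    qed
  qed
  have L1: "(\<lambda>x. (V / 3 + V / (12 * (real x + 1))) - V / real x / 2) \<longlonglongrightarrow> V / 3"
    using tendsto_diff[OF lim2 lim1] by simp
  have L2: "(\<lambda>x. (V / 3 + V / (12 * (real x + 1))) + V / real x / 2) \<longlonglongrightarrow> V / 3"
    using tendsto_add[OF lim2 lim1] by simp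
  show "(\<lambda>x. expected_highest_bid V x (\<beta> x)) \<longlonglongrightarrow> V / 3"
  proof (rule tendsto_sandwich[OF _ _ L1 L2])
    show "eventually (\<lambda>x. (V / 3 + V / (12 * (real x + 1))) - V / real x / 2 \<le> expected_highest_bid V x (\<beta> x)) sequentially"
    proof (rule eventually_mono[OF ev])
      fix x :: nat assume "1 \<le> x"
      thus "(V / 3 + V / (12 * (real x + 1))) - V / real x / 2 \<le> expected_highest_bid V x (\<beta> x)"
        using ehb_bound[OF assms _ bnd, of x] by (simp add: abs_le_iff)
    qed
    show "eventually (\<lambda>x. expected_highest_bid V x (\<beta> x) \<le> (V / 3 + V / (12 * (real x + 1))) + V / real x / 2) sequentially"
    proof (rule eventually_mono[OF ev])
      fix x :: nat assume "1 \<le> x"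
      thus "expected_highest_bid V x (\<beta> x) \<le> (V / 3 + V / (12 * (real x + 1))) + V / real x / 2"
        using ehb_bound[OF assms _ bnd, of x] by (simp add: abs_le_iff)
    qed
  qed
qed


end
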